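(* Let $\Gamma$ be a non-trivial finite group and let $G=\Gamma^\omega$, the countable product of copies of $\Gamma$, equipped with the product topology (each factor discrete) and its normalized Haar measure. Then $G$ has $2^{\mathfrak c}$ distinct dense subgroups that are not Haar measurable, where $\mathfrak c=2^{\aleph_0}$.
   Context: Haar measurability refers to the completed normalized Haar measure on the compact group $G$. *)

theory Defs
  imports "HOL-Probability.Probability" "HOL-Algebra.Product_Groups" "HOL-Library.Equipollence"
begin

definition omega_power :: "('a, 'b) monoid_scheme \<Rightarrow> (nat \<Rightarrow> 'a) monoid" where
  "omega_power \<Gamma> = product_group (UNIV :: nat set) (\<lambda>_. \<Gamma>)"

definition omega_power_topology :: "('a, 'b) monoid_scheme \<Rightarrow> (nat \<Rightarrow> 'a) topology" where
  "omega_power_topology \<Gamma> =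
     product_topology (\<lambda>_. discrete_topology (carrier \<Gamma>)) (UNIV :: nat set)"

text \<open>Normalized Haar measure on the compact group Gamma^omega: the infinite product of
  the normalized counting (uniform) measures on the finite factors, and its completion.\<close>
definition omega_power_haar :: "('a, 'b) monoid_scheme \<Rightarrow> (nat \<Rightarrow> 'a) measure" where
  "omega_power_haar \<Gamma> =
     PiM (UNIV :: nat set) (\<lambda>_. uniform_count_measure (carrier \<Gamma>))"

definition haar_measurable :: "('a, 'b) monoid_scheme \<Rightarrow> (nat \<Rightarrow> 'a) set \<Rightarrow> bool" where
  "haar_measurable \<Gamma> S \<longleftrightarrow> S \<in> sets (completion (omega_power_haar \<Gamma>))"

end

theory Submission
  imports Defs
begin
definition ultra :: "nat set set \<Rightarrow> bool" where
  "ultra U \<longleftrightarrow> (\<forall>A. A \<in> U \<or> - A \<in> U) \<and> (\<forall>F. finite F \<longrightarrow> F \<subseteq> U \<longrightarrow> \<Inter>F \<noteq> {})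
     \<and> (\<forall>A. finite A \<longrightarrow> - A \<in> U)"

lemma ultra_fip: "ultra U \<Longrightarrow> finite F \<Longrightarrow> F \<subseteq> U \<Longrightarrow> \<Inter>F \<noteq> {}"
  unfolding ultra_def by blast

lemma ultra_dich: "ultra U \<Longrightarrow> A \<notin> U \<Longrightarrow> - A \<in> U"
  unfolding ultra_def by blast

lemma ultra_mono: "ultra U \<Longrightarrow> A \<in> U \<Longrightarrow> A \<subseteq> B \<Longrightarrow> B \<in> U"
proof (rule ccontr)
  assume u: "ultra U" "A \<in> U" "A \<subseteq> B" "B \<notin> U"
  then have "- B \<in> U" by (rule_tac ultra_dich) 
  then have "\<Inter>{A, -B} \<noteq> {}" using u by (intro ultra_fip) auto
  with u show False by auto
qed

lemma ultra_Int: "ultra U \<Longrightarrow> A \<in> U \<Longrightarrow> B \<in> U \<Longrightarrow> A \<inter> B \<in> U"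
proof (rule ccontr)
  assume u: "ultra U" "A \<in> U" "B \<in> U" "A \<inter> B \<notin> U"
  then have "- (A \<inter> B) \<in> U" by (rule_tac ultra_dich)
  then have "\<Inter>{A, B, -(A \<inter> B)} \<noteq> {}" using u by (intro ultra_fip) auto
  then show False by auto
qed

lemma ultra_not_both: "ultra U \<Longrightarrow> A \<in> U \<Longrightarrow> - A \<notin> U"
proof
  assume u: "ultra U" "A \<in> U" "- A \<in> U"
  then have "\<Inter>{A, -A} \<noteq> {}" by (intro ultra_fip) auto
  then show False by auto
qed

lemma ultra_cofinite: "ultra U \<Longrightarrow> finite (- A) \<Longrightarrow> A \<in> U"
  unfolding ultra_def by (metis double_complement)

lemma ultra_UNIV: "ultra U \<Longrightarrow> UNIV \<in> U"
  by (rule ultra_cofinite) auto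

lemma ultra_finite_Union:
  assumes u: "ultra U" and I: "finite I" and un: "(\<Union>i\<in>I. P i) \<in> U"
  shows "\<exists>i\<in>I. P i \<in> U"
proof (rule ccontr)
  assume "\<not> ?thesis"
  then have "\<forall>i\<in>I. - P i \<in> U" using u ultra_dich by blast
  then have "insert (\<Union>i\<in>I. P i) ((\<lambda>i. - P i) ` I) \<subseteq> U" using un by auto
  then have "\<Inter>(insert (\<Union>i\<in>I. P i) ((\<lambda>i. - P i) ` I)) \<noteq> {}"
    using u I by (intro ultra_fip) auto
  then show False by auto
qed

definition fip :: "nat set set \<Rightarrow> bool" where
  "fip V \<longleftrightarrow> (\<forall>F. finite F \<longrightarrow> F \<subseteq> V \<longrightarrow> \<Inter>F \<noteq> {})"

lemma ultra_exists:
  assumes B: "\<And>F. finite F \<Longrightarrow> F \<subseteq> B \<Longrightarrow> infinite (\<Inter>F)"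
  shows "\<exists>U. ultra U \<and> B \<subseteq> U"
proof -
  define B' where "B' = B \<union> {- A | A. finite A}"
  have fipB': "fip B'"
    unfolding fip_def
  proof (intro allI impI)
    fix F assume F: "finite F" "F \<subseteq> B'"
    define F1 where "F1 = F \<inter> B"
    define F2 where "F2 = F - B"
    have F2c: "\<forall>X\<in>F2. finite (- X)" using F unfolding F2_def B'_def by auto
    have "finite F1" "F1 \<subseteq> B" using F unfolding F1_def by auto
    then have inf1: "infinite (\<Inter>F1)" using B by blast
    have "- (\<Inter>F2) = (\<Union>X\<in>F2. - X)" by auto
    moreover have "finite (\<Union>X\<in>F2. - X)" using F F2c unfolding F2_def by auto
    ultimately have fin2: "finite (- \<Inter>F2)" by simp
    have "\<Inter>F = \<Inter>F1 - (- \<Inter>F2)" unfolding F1_def F2_def by auto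
    moreover have "infinite (\<Inter>F1 - (- \<Inter>F2))" by (rule Diff_infinite_finite[OF fin2 inf1])
    ultimately have "infinite (\<Inter>F)" by metis
    then show "\<Inter>F \<noteq> {}" by auto
  qed
  define \<AA> where "\<AA> = {V. B' \<subseteq> V \<and> fip V}"
  have "\<exists>U\<in>\<AA>. \<forall>X\<in>\<AA>. U \<subseteq> X \<longrightarrow> X = U"
  proof (rule Zorn_Lemma2, intro ballI)
    fix \<C> assume C: "\<C> \<in> chains \<AA>"
    show "\<exists>U\<in>\<AA>. \<forall>X\<in>\<C>. X \<subseteq> U"
    proof (cases "\<C> = {}")
      case True then show ?thesis using fipB' unfolding \<AA>_def by auto
    next
      case False
      have "\<Union>\<C> \<in> \<AA>"
        unfolding \<AA>_def
      proof (intro CollectI conjI)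
        show "B' \<subseteq> \<Union>\<C>" using C False unfolding chains_def \<AA>_def by auto
        show "fip (\<Union>\<C>)" unfolding fip_def
        proof (intro allI impI)
          fix F assume F: "finite F" "F \<subseteq> \<Union>\<C>"
          have "subset.chain UNIV \<C>" using C unfolding chains_def chain_subset_alt_def by auto
          then obtain V where "V \<in> \<C>" "F \<subseteq> V"
            using finite_subset_Union_chain[OF F False] by blast
          then show "\<Inter>F \<noteq> {}" using C F unfolding chains_def \<AA>_def fip_def by auto
        qed
      qed
      then show ?thesis by auto
    qed
  qed
  then obtain U where U: "U \<in> \<AA>" and max: "\<And>X. X \<in> \<AA> \<Longrightarrow> U \<subseteq> X \<Longrightarrow> X = U" by blast
  have fU: "fip U" and BU: "B' \<subseteq> U" using U unfolding \<AA>_def by auto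
  have "A \<in> U \<or> - A \<in> U" for A
  proof (rule ccontr)
    assume n: "\<not> (A \<in> U \<or> - A \<in> U)"
    have "\<not> fip (insert A U)"
    proof
      assume "fip (insert A U)"
      then have "insert A U \<in> \<AA>" using BU unfolding \<AA>_def by auto
      then have "insert A U = U" using max by auto
      then show False using n by auto
    qed
    then obtain F1 where F1: "finite F1" "F1 \<subseteq> insert A U" "\<Inter>F1 = {}" unfolding fip_def by auto
    have "\<not> fip (insert (- A) U)"
    proof
      assume "fip (insert (-A) U)"
      then have "insert (-A) U \<in> \<AA>" using BU unfolding \<AA>_def by auto
      then have "insert (-A) U = U" using max by auto
      then show False using n by auto
    qed
    then obtain F2 where F2: "finite F2" "F2 \<subseteq> insert (-A) U" "\<Inter>F2 = {}" unfolding fip_def by auto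
    define F where "F = (F1 - {A}) \<union> (F2 - {-A})"
    have "finite F" "F \<subseteq> U" using F1 F2 unfolding F_def by auto
    then have "\<Inter>F \<noteq> {}" using fU unfolding fip_def by auto
    then obtain x where x: "x \<in> \<Inter>F" by auto
    show False
    proof (cases "x \<in> A")
      case True
      then have "x \<in> \<Inter>F1" using x unfolding F_def by auto
      then show False using F1 by auto
    next
      case False
      then have "x \<in> \<Inter>F2" using x unfolding F_def by auto
      then show False using F2 by auto
    qed
  qed
  moreover have "\<forall>A. finite A \<longrightarrow> - A \<in> U" using BU unfolding B'_def by blast
  moreover have "\<forall>F. finite F \<longrightarrow> F \<subseteq> U \<longrightarrow> \<Inter>F \<noteq> {}" using fU unfolding fip_def by blast
  ultimately have "ultra U" unfolding ultra_def by blast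
  then show ?thesis using BU unfolding B'_def by blast
qed

definition IX :: "(nat \<times> nat set set) set" where "IX = {(n, A). A \<subseteq> Pow {..<n}}"

lemma countable_IX: "countable IX"
proof -
  have "IX = (\<Union>n. (\<lambda>A. (n, A)) ` Pow (Pow {..<n}))" unfolding IX_def by auto
  moreover have "countable ((\<lambda>A. (n, A)) ` Pow (Pow {..<n}))" for n :: nat
    by (intro countable_finite finite_imageI) simp
  ultimately show ?thesis using countable_UN[of UNIV "\<lambda>n::nat. (\<lambda>A. (n, A)) ` Pow (Pow {..<n})"] by simp
qed

lemma infinite_IX: "infinite IX"
proof
  assume "finite IX"
  moreover have "range (\<lambda>n. (n, {})) \<subseteq> IX" unfolding IX_def by auto
  ultimately have "finite (range (\<lambda>n::nat. (n, {}::nat set set)))" by (rule finite_subset[rotated])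
  moreover have "inj (\<lambda>n::nat. (n, {}::nat set set))" by (auto intro: injI)
  ultimately show False using finite_imageD by blast
qed

definition ie :: "nat \<Rightarrow> nat \<times> nat set set" where "ie = from_nat_into IX"

lemma ie_surj: "p \<in> IX \<Longrightarrow> \<exists>k. ie k = p"
  using bij_betw_from_nat_into[OF countable_IX infinite_IX] unfolding ie_def bij_betw_def by (metis UNIV_I image_iff)

definition indep :: "nat set \<Rightarrow> nat set" where
  "indep Y = {k. Y \<inter> {..<fst (ie k)} \<in> snd (ie k)}"

lemma indep_inf:
  assumes fP: "finite P" and fQ: "finite Q" and PQ: "P \<inter> Q = {}"
  shows "infinite {k. (\<forall>Y\<in>P. k \<in> indep Y) \<and> (\<forall>Z\<in>Q. k \<notin> indep Z)}"
proof -
  have "\<forall>p\<in>P\<times>Q. \<exists>m. (m \<in> fst p) \<noteq> (m \<in> snd p)"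
  proof
    fix p assume "p \<in> P \<times> Q"
    then have "fst p \<noteq> snd p" using PQ by auto
    then show "\<exists>m. (m \<in> fst p) \<noteq> (m \<in> snd p)" by blast
  qed
  then obtain w where w: "\<forall>p\<in>P\<times>Q. (w p \<in> fst p) \<noteq> (w p \<in> snd p)" by metis
  define m where "m = Suc (Max (insert 0 (w ` (P\<times>Q))))"
  have m: "Y \<inter> {..<n} \<noteq> Z \<inter> {..<n}" if "Y \<in> P" "Z \<in> Q" "m \<le> n" for Y Z n
  proof -
    have "w (Y, Z) \<le> Max (insert 0 (w ` (P\<times>Q)))" using that fP fQ by (intro Max_ge) auto
    then have lt: "w (Y, Z) < n" using that unfolding m_def by auto
    have "(w (Y,Z) \<in> Y) \<noteq> (w (Y,Z) \<in> Z)" using w that by auto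
    then show ?thesis using lt by blast
  qed
  define pr where "pr n = (n, (\<lambda>Y. Y \<inter> {..<n}) ` P)" for n
  have "pr n \<in> IX" for n unfolding pr_def IX_def by auto
  then have "\<forall>n. \<exists>k. ie k = pr n" using ie_surj by blast
  then obtain kk where kk: "\<And>n. ie (kk n) = pr n" by metis
  have injkk: "inj kk"
  proof (rule injI)
    fix a b assume "kk a = kk b"
    then have "pr a = pr b" using kk by metis
    then show "a = b" unfolding pr_def by auto
  qed
  have sub: "kk ` {m..} \<subseteq> {k. (\<forall>Y\<in>P. k \<in> indep Y) \<and> (\<forall>Z\<in>Q. k \<notin> indep Z)}"
  proof
    fix k assume "k \<in> kk ` {m..}"
    then obtain n where n: "m \<le> n" "k = kk n" by auto
    then have ik: "ie k = pr n" using kk by auto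
    have "\<forall>Y\<in>P. k \<in> indep Y" using ik unfolding indep_def pr_def by auto
    moreover have "\<forall>Z\<in>Q. k \<notin> indep Z"
    proof (intro ballI)
      fix Z assume Z: "Z \<in> Q"
      have "Z \<inter> {..<n} \<notin> (\<lambda>Y. Y \<inter> {..<n}) ` P" using m[OF _ Z n(1)] by auto
      then show "k \<notin> indep Z" using ik unfolding indep_def pr_def by auto
    qed
    ultimately show "k \<in> {k. (\<forall>Y\<in>P. k \<in> indep Y) \<and> (\<forall>Z\<in>Q. k \<notin> indep Z)}" by auto
  qed
  have "infinite (kk ` {m..})"
    using injkk infinite_Ici[of m] by (metis finite_imageD inj_on_subset subset_UNIV)
  then show ?thesis using sub infinite_super by blast
qed

definition fam :: "nat set set \<Rightarrow> nat set set" where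
  "fam S = indep ` S \<union> (\<lambda>Y. - indep Y) ` (- S)"

lemma fam_fip:
  assumes F: "finite F" "F \<subseteq> fam S"
  shows "infinite (\<Inter>F)"
proof -
  obtain P where P: "P \<subseteq> S" "finite P" "F \<inter> indep ` S = indep ` P"
    using finite_subset_image[of "F \<inter> indep ` S" indep S] F(1) by auto
  obtain Q where Q: "Q \<subseteq> - S" "finite Q" "F \<inter> (\<lambda>Y. - indep Y) ` (- S) = (\<lambda>Y. - indep Y) ` Q"
    using finite_subset_image[of "F \<inter> (\<lambda>Y. - indep Y) ` (- S)" "\<lambda>Y. - indep Y" "- S"] F(1) by auto
  have PQ: "P \<inter> Q = {}" using P Q by auto
  have "{k. (\<forall>Y\<in>P. k \<in> indep Y) \<and> (\<forall>Z\<in>Q. k \<notin> indep Z)} \<subseteq> \<Inter>F"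
  proof
    fix k assume k: "k \<in> {k. (\<forall>Y\<in>P. k \<in> indep Y) \<and> (\<forall>Z\<in>Q. k \<notin> indep Z)}"
    show "k \<in> \<Inter>F"
    proof
      fix X assume X: "X \<in> F"
      then have "X \<in> F \<inter> indep ` S \<or> X \<in> F \<inter> (\<lambda>Y. - indep Y) ` (- S)"
        using F(2) unfolding fam_def by auto
      then have "X \<in> indep ` P \<or> X \<in> (\<lambda>Y. - indep Y) ` Q" using P(3) Q(3) by simp
      then show "k \<in> X" using k by auto
    qed
  qed
  then show ?thesis using indep_inf[OF P(2) Q(2) PQ] infinite_super by blast
qed

definition ufam :: "nat set set \<Rightarrow> nat set set" where
  "ufam S = (SOME U. ultra U \<and> fam S \<subseteq> U)"

lemma ufam: "ultra (ufam S) \<and> fam S \<subseteq> ufam S"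
  unfolding ufam_def by (rule someI_ex, rule ultra_exists, rule fam_fip)

lemma inj_ufam: "inj ufam"
proof (rule injI)
  fix S S' assume eq: "ufam S = ufam S'"
  show "S = S'"
  proof (rule ccontr)
    assume "S \<noteq> S'"
    then obtain Y where "(Y \<in> S \<and> Y \<notin> S') \<or> (Y \<in> S' \<and> Y \<notin> S)" by blast
    then show False
    proof
      assume Y: "Y \<in> S \<and> Y \<notin> S'"
      then have "indep Y \<in> indep ` S" "- indep Y \<in> (\<lambda>Y. - indep Y) ` (- S')" by auto
      then have "indep Y \<in> ufam S" "- indep Y \<in> ufam S'" using ufam[of S] ufam[of S'] unfolding fam_def by blast+
      then show False using eq ufam ultra_not_both by metis
    next
      assume Y: "Y \<in> S' \<and> Y \<notin> S"
      then have "indep Y \<in> indep ` S'" "- indep Y \<in> (\<lambda>Y. - indep Y) ` (- S)" by auto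
      then have "indep Y \<in> ufam S'" "- indep Y \<in> ufam S" using ufam[of S] ufam[of S'] unfolding fam_def by blast+
      then show False using eq ufam ultra_not_both by metis
    qed
  qed
qed

lemma Pow_lepoll: "A \<lesssim> B \<Longrightarrow> Pow A \<lesssim> Pow B"
proof -
  assume "A \<lesssim> B"
  then obtain f where f: "inj_on f A" "f \<in> A \<rightarrow> B" unfolding lepoll_def' by auto
  have "inj_on (image f) (Pow A)" using f(1) by (rule inj_on_image_Pow)
  moreover have "image f \<in> Pow A \<rightarrow> Pow B" using f(2) by auto
  ultimately show ?thesis unfolding lepoll_def' by auto
qed

locale omega = group G for G (structure) +
  assumes finC: "finite (carrier G)"
begin

definition NU :: "nat set set \<Rightarrow> (nat \<Rightarrow> 'a) set" where
  "NU U = {x. (\<forall>i. x i \<in> carrier G) \<and> {i. x i = \<one>} \<in> U}"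

lemma carrier_OP: "carrier (omega_power G) = {x. \<forall>i. x i \<in> carrier G}"
  unfolding omega_power_def by (auto simp: PiE_def extensional_def)

lemma group_OP: "group (omega_power G)"
  unfolding omega_power_def by (rule product_group) (rule is_group)

lemma NU_subgroup:
  assumes u: "ultra U"
  shows "subgroup (NU U) (omega_power G)"
proof
  show "NU U \<subseteq> carrier (omega_power G)" unfolding NU_def carrier_OP by auto
next
  fix x y assume x: "x \<in> NU U" and y: "y \<in> NU U"
  have "{i. x i = \<one>} \<inter> {i. y i = \<one>} \<in> U" using x y u ultra_Int unfolding NU_def by auto
  moreover have "{i. x i = \<one>} \<inter> {i. y i = \<one>} \<subseteq> {i. x i \<otimes> y i = \<one>}" by auto
  ultimately have "{i. x i \<otimes> y i = \<one>} \<in> U" using u ultra_mono by blast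
  then show "x \<otimes>\<^bsub>omega_power G\<^esub> y \<in> NU U"
    using x y unfolding NU_def omega_power_def by auto
next
  show "\<one>\<^bsub>omega_power G\<^esub> \<in> NU U"
    using ultra_UNIV[OF u] unfolding NU_def omega_power_def by auto
next
  fix x assume x: "x \<in> NU U"
  then have xc: "x \<in> carrier (omega_power G)" unfolding NU_def carrier_OP by auto
  have "inv\<^bsub>omega_power G\<^esub> x = (\<lambda>i. inv (x i))"
    using xc unfolding omega_power_def by (subst inv_product_group) (auto intro: is_group)
  moreover have "{i. inv (x i) = \<one>} = {i. x i = \<one>}" using x unfolding NU_def
    by (auto simp: inv_eq_1_iff)
  ultimately show "inv\<^bsub>omega_power G\<^esub> x \<in> NU U" using x unfolding NU_def by auto
qed

lemma NU_cofinite: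
  assumes u: "ultra U" and x: "x \<in> NU U" and y: "\<forall>i. y i \<in> carrier G" and fin: "finite {i. y i \<noteq> x i}"
  shows "y \<in> NU U"
proof -
  have "{i. x i = \<one>} \<inter> - {i. y i \<noteq> x i} \<in> U"
    using x u ultra_Int ultra_cofinite fin unfolding NU_def by auto
  moreover have "{i. x i = \<one>} \<inter> - {i. y i \<noteq> x i} \<subseteq> {i. y i = \<one>}" by auto
  ultimately show ?thesis using u ultra_mono y unfolding NU_def by blast
qed

lemma NU_dense:
  assumes u: "ultra U"
  shows "(omega_power_topology G) closure_of (NU U) = topspace (omega_power_topology G)"
  unfolding dense_intersects_open
proof (intro allI impI)
  fix T assume T: "openin (omega_power_topology G) T \<and> T \<noteq> {}"
  then obtain x where x: "x \<in> T" by auto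
  have "\<exists>V. finite {i. V i \<noteq> carrier G} \<and> (\<forall>i. V i \<subseteq> carrier G) \<and>
    x \<in> PiE UNIV V \<and> PiE UNIV V \<subseteq> T"
    using T x unfolding omega_power_topology_def openin_product_topology_alt by simp
  then obtain V where V: "finite {i. V i \<noteq> carrier G}" "\<forall>i. V i \<subseteq> carrier G"
    "x \<in> PiE UNIV V" "PiE UNIV V \<subseteq> T" by blast
  define y where "y i = (if V i \<noteq> carrier G then x i else \<one>)" for i
  have "y \<in> PiE UNIV V" using V(3) unfolding y_def by (auto simp: PiE_def)
  then have yT: "y \<in> T" using V(4) by auto
  have yc: "\<forall>i. y i \<in> carrier G" using V(2,3) unfolding y_def by (auto simp: PiE_def)
  have "- {i. V i \<noteq> carrier G} \<subseteq> {i. y i = \<one>}" unfolding y_def by auto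
  then have "{i. y i = \<one>} \<in> U" using ultra_cofinite[OF u, of "- {i. V i \<noteq> carrier G}"] V(1) ultra_mono[OF u]
    by auto
  then have "y \<in> NU U" using yc unfolding NU_def by auto
  then show "NU U \<inter> T \<noteq> {}" using yT by auto
qed

lemma NU_inj:
  assumes u: "ultra U" and v: "ultra V" and ne: "U \<noteq> V" and g: "g \<in> carrier G" "g \<noteq> \<one>"
  shows "NU U \<noteq> NU V"
proof -
  have "\<exists>A. A \<in> U \<and> A \<notin> V \<or> A \<in> V \<and> A \<notin> U" using ne by blast
  then obtain A where A: "A \<in> U \<and> A \<notin> V \<or> A \<in> V \<and> A \<notin> U" by blast
  define x where "x i = (if i \<in> A then \<one> else g)" for i
  have xc: "\<forall>i. x i \<in> carrier G" using g unfolding x_def by auto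
  have xA: "{i. x i = \<one>} = A" using g unfolding x_def by auto
  have "(x \<in> NU U) \<noteq> (x \<in> NU V)" using A xc xA unfolding NU_def by auto
  then show ?thesis by auto
qed

end

context omega begin

definition Mf :: "'a measure" where "Mf = uniform_count_measure (carrier G)"

lemma M_def': "omega_power_haar G = PiM UNIV (\<lambda>_. Mf)"
  unfolding omega_power_haar_def Mf_def ..

lemma C_ne: "carrier G \<noteq> {}" using one_closed by auto

lemma prob_Mf: "prob_space Mf"
  unfolding Mf_def using finC C_ne by (rule prob_space_uniform_count_measure)

lemma space_Mf: "space Mf = carrier G" unfolding Mf_def by (rule space_uniform_count_measure)
lemma sets_Mf: "sets Mf = Pow (carrier G)" unfolding Mf_def by (rule sets_uniform_count_measure)

lemma space_M: "space (omega_power_haar G) = {x. \<forall>i. x i \<in> carrier G}"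
  by (auto simp: M_def' space_PiM space_Mf PiE_def extensional_def)

lemma space_M': "space (omega_power_haar G) = PiE UNIV (\<lambda>i. space Mf)"
  by (simp add: M_def' space_PiM)

lemma prob_M: "prob_space (omega_power_haar G)"
  unfolding M_def' by (rule prob_space_PiM) (rule prob_Mf)

definition lmul :: "(nat \<Rightarrow> 'a) \<Rightarrow> (nat \<Rightarrow> 'a) \<Rightarrow> nat \<Rightarrow> 'a" where
  "lmul h x = (\<lambda>i. h i \<otimes> x i)"

lemma meas_Mf: "f \<in> carrier G \<rightarrow> carrier G \<Longrightarrow> f \<in> measurable Mf Mf"
  unfolding measurable_def by (auto simp: space_Mf sets_Mf)

lemma lmul_space: "h \<in> space (omega_power_haar G) \<Longrightarrow> x \<in> space (omega_power_haar G) \<Longrightarrow>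
   lmul h x \<in> space (omega_power_haar G)"
  by (auto simp: space_M lmul_def)

lemma lmul_meas:
  assumes h: "h \<in> space (omega_power_haar G)"
  shows "lmul h \<in> measurable (omega_power_haar G) (omega_power_haar G)"
proof -
  have "(\<lambda>x i. (\<lambda>i x. h i \<otimes> x i) i x) \<in> measurable (omega_power_haar G) (PiM UNIV (\<lambda>_. Mf))"
  proof (rule measurable_PiM_single')
    fix i :: nat
    have "(\<lambda>x. x i) \<in> measurable (omega_power_haar G) Mf"
      unfolding M_def' by (rule measurable_component_singleton) simp
    moreover have "(\<lambda>c. h i \<otimes> c) \<in> measurable Mf Mf" using h by (intro meas_Mf) (auto simp: space_M)
    ultimately show "(\<lambda>x. h i \<otimes> x i) \<in> measurable (omega_power_haar G) Mf"
      by (rule measurable_compose)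
  next
    show "(\<lambda>x i. h i \<otimes> x i) \<in> space (omega_power_haar G) \<rightarrow> PiE UNIV (\<lambda>i. space Mf)"
      using h by (auto simp: space_M space_Mf)
  qed
  then show ?thesis unfolding lmul_def M_def' by simp
qed

lemma card_lmul:
  assumes h: "h \<in> carrier G" and A: "A \<subseteq> carrier G"
  shows "card {c \<in> carrier G. h \<otimes> c \<in> A} = card A"
proof -
  have "(\<lambda>c. h \<otimes> c) ` {c \<in> carrier G. h \<otimes> c \<in> A} = A"
  proof
    show "(\<lambda>c. h \<otimes> c) ` {c \<in> carrier G. h \<otimes> c \<in> A} \<subseteq> A" by auto
    show "A \<subseteq> (\<lambda>c. h \<otimes> c) ` {c \<in> carrier G. h \<otimes> c \<in> A}"
    proof
      fix a assume a: "a \<in> A"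
      then have ac: "a \<in> carrier G" using A by auto
      have "h \<otimes> (inv h \<otimes> a) = a" using h ac by (simp add: m_assoc[symmetric])
      then show "a \<in> (\<lambda>c. h \<otimes> c) ` {c \<in> carrier G. h \<otimes> c \<in> A}"
        using a h ac by (intro image_eqI[of _ _ "inv h \<otimes> a"]) auto
    qed
  qed
  moreover have "inj_on (\<lambda>c. h \<otimes> c) {c \<in> carrier G. h \<otimes> c \<in> A}"
    using h by (auto intro: inj_onI)
  ultimately show ?thesis using card_image by metis
qed

lemma lmul_distr:
  assumes h: "h \<in> space (omega_power_haar G)"
  shows "distr (omega_power_haar G) (omega_power_haar G) (lmul h) = omega_power_haar G"
proof (rule measure_eqI_PiM_infinite[where I=UNIV and M="\<lambda>_. Mf"])
  show "sets (distr (omega_power_haar G) (omega_power_haar G) (lmul h)) = sets (PiM UNIV (\<lambda>_. Mf))"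
    by (simp add: M_def')
  show "sets (omega_power_haar G) = sets (PiM UNIV (\<lambda>_. Mf))" by (simp add: M_def')
  have "prob_space (distr (omega_power_haar G) (omega_power_haar G) (lmul h))"
    using prob_space.prob_space_distr[OF prob_M lmul_meas[OF h]] .
  then show "finite_measure (distr (omega_power_haar G) (omega_power_haar G) (lmul h))"
    by (simp add: prob_space_def)
next
  fix A :: "nat \<Rightarrow> 'a set" and J :: "nat set"
  assume J: "finite J" "J \<subseteq> UNIV" and A: "\<And>i. i \<in> J \<Longrightarrow> A i \<in> sets Mf"
  have AC: "A i \<subseteq> carrier G" if "i \<in> J" for i using A[OF that] by (simp add: sets_Mf)
  let ?E = "prod_emb UNIV (\<lambda>_. Mf) J (Pi\<^sub>E J A)"
  let ?B = "\<lambda>j. {c \<in> carrier G. h j \<otimes> c \<in> A j}"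
  have Es: "?E \<in> sets (omega_power_haar G)" unfolding M_def' using J A by (intro sets_PiM_I) auto
  have pre: "lmul h -` ?E \<inter> space (omega_power_haar G) = prod_emb UNIV (\<lambda>_. Mf) J (Pi\<^sub>E J ?B)"
    using h by (auto simp: prod_emb_iff PiE_iff lmul_def space_M space_Mf extensional_def)
  have "emeasure (distr (omega_power_haar G) (omega_power_haar G) (lmul h)) ?E
      = emeasure (omega_power_haar G) (prod_emb UNIV (\<lambda>_. Mf) J (Pi\<^sub>E J ?B))"
    using Es lmul_meas[OF h] by (simp add: emeasure_distr pre)
  also have "\<dots> = (\<Prod>j\<in>J. emeasure Mf (?B j))"
    unfolding M_def' using J by (intro emeasure_PiM_emb prob_Mf) (auto simp: sets_Mf)
  also have "\<dots> = (\<Prod>j\<in>J. emeasure Mf (A j))"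
  proof (rule prod.cong[OF refl])
    fix j assume j: "j \<in> J"
    have hj: "h j \<in> carrier G" using h by (auto simp: space_M)
    show "emeasure Mf (?B j) = emeasure Mf (A j)"
      unfolding Mf_def using finC AC[OF j] card_lmul[OF hj AC[OF j]]
      by (subst (1 2) emeasure_uniform_count_measure) auto
  qed
  also have "\<dots> = emeasure (omega_power_haar G) ?E"
    unfolding M_def' using J A by (intro emeasure_PiM_emb[symmetric] prob_Mf) auto
  finally show "emeasure (distr (omega_power_haar G) (omega_power_haar G) (lmul h)) ?E
      = emeasure (omega_power_haar G) ?E" .
qed

lemma lmul_emeasure:
  assumes h: "h \<in> space (omega_power_haar G)" and A: "A \<in> sets (omega_power_haar G)"
  shows "emeasure (omega_power_haar G) (lmul h -` A \<inter> space (omega_power_haar G)) = emeasure (omega_power_haar G) A"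
proof -
  have "emeasure (omega_power_haar G) A = emeasure (distr (omega_power_haar G) (omega_power_haar G) (lmul h)) A"
    using lmul_distr[OF h] by simp
  also have "\<dots> = emeasure (omega_power_haar G) (lmul h -` A \<inter> space (omega_power_haar G))"
    using lmul_meas[OF h] A by (simp add: emeasure_distr)
  finally show ?thesis by simp
qed

lemma lmul_measure:
  assumes h: "h \<in> space (omega_power_haar G)" and A: "A \<in> sets (omega_power_haar G)"
  shows "measure (omega_power_haar G) (lmul h -` A \<inter> space (omega_power_haar G)) = measure (omega_power_haar G) A"
  using lmul_emeasure[OF assms] by (simp add: measure_def)

lemma lmul_sets:
  assumes h: "h \<in> space (omega_power_haar G)" and A: "A \<in> sets (omega_power_haar G)"
  shows "lmul h -` A \<inter> space (omega_power_haar G) \<in> sets (omega_power_haar G)"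
  using lmul_meas[OF h] A by (rule measurable_sets)

end

context omega begin

abbreviation MM where "MM \<equiv> omega_power_haar G"

lemma inv_mult_eq_one: "b \<in> carrier G \<Longrightarrow> c \<in> carrier G \<Longrightarrow> (inv b \<otimes> c = \<one>) = (c = b)"
proof
  assume b: "b \<in> carrier G" and c: "c \<in> carrier G" and e: "inv b \<otimes> c = \<one>"
  have "c = b \<otimes> (inv b \<otimes> c)" using b c by (simp add: m_assoc[symmetric])
  then show "c = b" using e b by simp
qed simp

lemma aux2: "a \<in> carrier G \<Longrightarrow> b \<in> carrier G \<Longrightarrow> c \<in> carrier G \<Longrightarrow> (a \<otimes> inv b \<otimes> c = a) = (c = b)"
  by (simp add: m_assoc inv_mult_eq_one)

definition cyl :: "nat set \<Rightarrow> (nat \<Rightarrow> 'a) \<Rightarrow> (nat \<Rightarrow> 'a) set" where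
  "cyl J w = {x \<in> space MM. \<forall>j\<in>J. x j = w j}"

lemma cyl_sets:
  assumes J: "finite J" and w: "\<And>j. j \<in> J \<Longrightarrow> w j \<in> carrier G"
  shows "cyl J w \<in> sets MM"
proof -
  have "cyl J w = prod_emb UNIV (\<lambda>_. Mf) J (Pi\<^sub>E J (\<lambda>j. {w j}))"
    unfolding cyl_def prod_emb_def space_M' by (auto simp: PiE_iff)
  also have "\<dots> \<in> sets MM" unfolding M_def' using J w by (intro sets_PiM_I) (auto simp: sets_Mf)
  finally show ?thesis .
qed

definition invs :: "(nat \<Rightarrow> 'a) set \<Rightarrow> bool" where
  "invs W \<longleftrightarrow> W \<in> sets MM \<and>
     (\<forall>d\<in>space MM. finite {i. d i \<noteq> \<one>} \<longrightarrow> (AE x in MM. x \<in> W \<longleftrightarrow> lmul d x \<in> W))"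

lemma invs_space: "invs (space MM)"
  unfolding invs_def by (auto simp: lmul_space)

lemma cyl_equal:
  assumes W: "invs W" and J: "finite J" and w: "\<And>j. j \<in> J \<Longrightarrow> w j \<in> carrier G"
    and w': "\<And>j. j \<in> J \<Longrightarrow> w' j \<in> carrier G"
  shows "measure MM (W \<inter> cyl J w) = measure MM (W \<inter> cyl J w')"
proof -
  define d where "d i = (if i \<in> J then w' i \<otimes> inv (w i) else \<one>)" for i
  have d: "d \<in> space MM" using w w' unfolding d_def space_M by auto
  have dfin: "finite {i. d i \<noteq> \<one>}" using J by (rule finite_subset[rotated]) (auto simp: d_def)
  have Ws: "W \<in> sets MM" using W unfolding invs_def by auto
  have pt: "(d j \<otimes> x j = w' j) = (x j = w j)" if "x \<in> space MM" "j \<in> J" for x j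
    using that w w' aux2[of "w' j" "w j" "x j"] unfolding d_def space_M by auto
  have pre: "lmul d -` (W \<inter> cyl J w') \<inter> space MM = (lmul d -` W \<inter> space MM) \<inter> cyl J w"
    using pt lmul_space[OF d] unfolding cyl_def by (auto simp: lmul_def)
  have s1: "W \<inter> cyl J w' \<in> sets MM" using Ws cyl_sets[OF J w'] by auto
  have s2: "W \<inter> cyl J w \<in> sets MM" using Ws cyl_sets[OF J w] by auto
  have s3: "(lmul d -` W \<inter> space MM) \<inter> cyl J w \<in> sets MM"
    using lmul_sets[OF d Ws] cyl_sets[OF J w] by auto
  have "measure MM (W \<inter> cyl J w') = measure MM ((lmul d -` W \<inter> space MM) \<inter> cyl J w)"
    using lmul_measure[OF d s1] pre by simp
  also have "\<dots> = measure MM (W \<inter> cyl J w)"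
  proof (rule measure_eq_AE[OF _ s3 s2])
    have "AE x in MM. x \<in> W \<longleftrightarrow> lmul d x \<in> W" using W d dfin unfolding invs_def by auto
    then show "AE x in MM. x \<in> (lmul d -` W \<inter> space MM) \<inter> cyl J w \<longleftrightarrow> x \<in> W \<inter> cyl J w"
      by (rule AE_mp) (auto simp: cyl_def)
  qed
  finally show ?thesis by simp
qed

lemma cyl_disj:
  "disjoint_family_on (\<lambda>v. W \<inter> cyl J v) (Pi\<^sub>E J X)"
  unfolding disjoint_family_on_def
proof (intro ballI impI)
  fix v v' assume v: "v \<in> Pi\<^sub>E J X" and v': "v' \<in> Pi\<^sub>E J X" and ne: "v \<noteq> v'"
  then obtain j where "j \<in> J" "v j \<noteq> v' j" using PiE_ext[OF v v'] by blast
  then show "(W \<inter> cyl J v) \<inter> (W \<inter> cyl J v') = {}" unfolding cyl_def by auto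
qed

lemma cyl_sum:
  assumes W: "W \<in> sets MM" and J: "finite J" and X: "\<And>j. j \<in> J \<Longrightarrow> X j \<subseteq> carrier G"
  shows "measure MM (\<Union>v\<in>Pi\<^sub>E J X. W \<inter> cyl J v) = (\<Sum>v\<in>Pi\<^sub>E J X. measure MM (W \<inter> cyl J v))"
proof -
  interpret prob_space MM by (rule prob_M)
  have fin: "finite (Pi\<^sub>E J X)"
    using J X finC by (intro finite_PiE) (auto intro: finite_subset)
  show ?thesis
  proof (rule finite_measure_finite_Union[OF fin _ cyl_disj])
    show "(\<lambda>v. W \<inter> cyl J v) ` Pi\<^sub>E J X \<subseteq> sets MM"
      using W J X by (auto intro!: sets.Int cyl_sets simp: PiE_iff)
  qed
qed

lemma card_PiE_C: "finite J \<Longrightarrow> card (Pi\<^sub>E J (\<lambda>_. carrier G)) = card (carrier G) ^ card J"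
  by (simp add: card_PiE)

lemma cyl_measure:
  assumes W: "invs W" and J: "finite J" and v: "\<And>j. j \<in> J \<Longrightarrow> v j \<in> carrier G"
  shows "measure MM (W \<inter> cyl J v) = measure MM W / real (card (carrier G) ^ card J)"
proof -
  let ?P = "Pi\<^sub>E J (\<lambda>_. carrier G)"
  let ?m = "measure MM (W \<inter> cyl J (\<lambda>_. \<one>))"
  have Ws: "W \<in> sets MM" using W unfolding invs_def by auto
  have all: "measure MM (W \<inter> cyl J u) = ?m" if "u \<in> ?P" for u
    using cyl_equal[OF W J, of u "\<lambda>_. \<one>"] that by (auto simp: PiE_iff)
  have cover: "W = (\<Union>u\<in>?P. W \<inter> cyl J u)"
  proof
    show "W \<subseteq> (\<Union>u\<in>?P. W \<inter> cyl J u)"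
    proof
      fix x assume x: "x \<in> W"
      then have xs: "x \<in> space MM" using Ws sets.sets_into_space by auto
      then have "restrict x J \<in> ?P" by (auto simp: space_M)
      moreover have "x \<in> cyl J (restrict x J)" using xs unfolding cyl_def by auto
      ultimately show "x \<in> (\<Union>u\<in>?P. W \<inter> cyl J u)" using x by (intro UN_I[of "restrict x J"]) auto
    qed
  qed auto
  have "measure MM W = (\<Sum>u\<in>?P. measure MM (W \<inter> cyl J u))"
    using cyl_sum[OF Ws J, of "\<lambda>_. carrier G"] cover by simp
  also have "\<dots> = (\<Sum>u\<in>?P. ?m)" using all by (rule sum.cong[OF refl])
  also have "\<dots> = real (card (carrier G) ^ card J) * ?m" using card_PiE_C[OF J] by simp
  finally have eq: "measure MM W = real (card (carrier G) ^ card J) * ?m" .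
  have pos: "real (card (carrier G) ^ card J) > 0" using finC C_ne by (simp add: card_gt_0_iff)
  have "measure MM (W \<inter> cyl J v) = ?m" by (rule cyl_equal[OF W J]) (auto simp: v)
  then show ?thesis using eq pos by (simp add: field_simps)
qed

lemma cyl_union_measure:
  assumes W: "invs W" and J: "finite J" and X: "\<And>j. j \<in> J \<Longrightarrow> X j \<subseteq> carrier G"
  shows "measure MM (\<Union>v\<in>Pi\<^sub>E J X. W \<inter> cyl J v) =
    real (card (Pi\<^sub>E J X)) * (measure MM W / real (card (carrier G) ^ card J))"
proof -
  have Ws: "W \<in> sets MM" using W unfolding invs_def by auto
  have "measure MM (\<Union>v\<in>Pi\<^sub>E J X. W \<inter> cyl J v) = (\<Sum>v\<in>Pi\<^sub>E J X. measure MM (W \<inter> cyl J v))"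
    by (rule cyl_sum[OF Ws J X])
  also have "\<dots> = (\<Sum>v\<in>Pi\<^sub>E J X. measure MM W / real (card (carrier G) ^ card J))"
    using X by (intro sum.cong[OF refl] cyl_measure[OF W J]) (auto simp: PiE_iff)
  finally show ?thesis by simp
qed

end

context omega begin

lemma indep_meas:
  assumes S: "invs S" and E: "E \<in> sets MM"
  shows "measure MM (S \<inter> E) = measure MM S * measure MM E"
proof -
  interpret prob_space MM by (rule prob_M)
  have Ss: "S \<in> sets MM" using S unfolding invs_def by auto
  have Ssp: "S \<subseteq> space MM" using Ss sets.sets_into_space by auto
  have spc: "(\<Pi>\<^sub>E i\<in>UNIV. space Mf) = space MM" by (simp add: space_M')
  have sg: "sigma_sets (\<Pi>\<^sub>E i\<in>UNIV. space Mf) (prod_algebra UNIV (\<lambda>_. Mf)) = sets MM"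
    unfolding M_def' sets_PiM ..
  have E': "E \<in> sigma_sets (\<Pi>\<^sub>E i\<in>UNIV. space Mf) (prod_algebra UNIV (\<lambda>_. Mf))"
    using E sg by simp
  have pos: "real (card (carrier G) ^ card J) > 0" for J using finC C_ne by (simp add: card_gt_0_iff)
  show ?thesis
    using Int_stable_prod_algebra prod_algebra_sets_into_space E'
  proof (induction rule: sigma_sets_induct_disjoint)
    case (basic A)
    obtain J X where A: "A = prod_emb UNIV (\<lambda>_. Mf) J (Pi\<^sub>E J X)" "finite J"
      "\<And>i. i \<in> J \<Longrightarrow> X i \<in> sets Mf"
      by (rule prod_algebraE[OF basic]) auto
    have XC: "\<And>i. i \<in> J \<Longrightarrow> X i \<subseteq> carrier G" using A(3) by (auto simp: sets_Mf)
    have Aeq: "A = (\<Union>v\<in>Pi\<^sub>E J X. space MM \<inter> cyl J v)"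
    proof
      show "A \<subseteq> (\<Union>v\<in>Pi\<^sub>E J X. space MM \<inter> cyl J v)"
      proof
        fix x assume "x \<in> A"
        then have x: "x \<in> space MM" "restrict x J \<in> Pi\<^sub>E J X"
          unfolding A(1) prod_emb_def spc[symmetric] by auto
        then show "x \<in> (\<Union>v\<in>Pi\<^sub>E J X. space MM \<inter> cyl J v)"
          by (intro UN_I[of "restrict x J"]) (auto simp: cyl_def)
      qed
      show "(\<Union>v\<in>Pi\<^sub>E J X. space MM \<inter> cyl J v) \<subseteq> A"
      proof
        fix x assume "x \<in> (\<Union>v\<in>Pi\<^sub>E J X. space MM \<inter> cyl J v)"
        then obtain v where v: "v \<in> Pi\<^sub>E J X" "x \<in> cyl J v" by auto
        then have "restrict x J \<in> Pi\<^sub>E J X" unfolding cyl_def by (auto simp: PiE_iff)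
        then show "x \<in> A" using v unfolding A(1) prod_emb_def spc[symmetric] cyl_def by auto
      qed
    qed
    have SA: "S \<inter> A = (\<Union>v\<in>Pi\<^sub>E J X. S \<inter> cyl J v)" using Aeq Ssp by auto
    have m1: "measure MM (S \<inter> A) = real (card (Pi\<^sub>E J X)) * (measure MM S / real (card (carrier G) ^ card J))"
      unfolding SA by (rule cyl_union_measure[OF S A(2) XC])
    have m2: "measure MM A = real (card (Pi\<^sub>E J X)) * (1 / real (card (carrier G) ^ card J))"
      unfolding Aeq using cyl_union_measure[OF invs_space A(2) XC] prob_space by simp
    show ?case using pos[of J] by (simp only: m1 m2) (simp add: field_simps)
  next
    case empty
    show ?case by simp
  next
    case (compl A)
    have As: "A \<in> sets MM" using compl(1) sg by simp
    have eq1: "S \<inter> ((\<Pi>\<^sub>E i\<in>UNIV. space Mf) - A) = S - (S \<inter> A)" using Ssp spc by auto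
    have d1: "measure MM (S - (S \<inter> A)) = measure MM S - measure MM (S \<inter> A)"
      using Ss As by (intro finite_measure_Diff) auto
    have c1: "measure MM ((\<Pi>\<^sub>E i\<in>UNIV. space Mf) - A) = 1 - measure MM A"
      unfolding spc using finite_measure_compl[OF As] prob_space by simp
    have "measure MM (S \<inter> ((\<Pi>\<^sub>E i\<in>UNIV. space Mf) - A)) = measure MM S - measure MM (S \<inter> A)"
      by (simp only: eq1 d1)
    also have "\<dots> = measure MM S - measure MM S * measure MM A" by (simp only: compl(2))
    also have "\<dots> = measure MM S * (1 - measure MM A)" by (simp add: algebra_simps)
    also have "\<dots> = measure MM S * measure MM ((\<Pi>\<^sub>E i\<in>UNIV. space Mf) - A)" using c1 by simp
    finally show ?case .
  next
    case (union A)
    have As: "range A \<subseteq> sets MM" using union(2) sg by simp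
    have d2: "disjoint_family (\<lambda>i. S \<inter> A i)"
      using union(1) unfolding disjoint_family_on_def by blast
    have r2: "range (\<lambda>i. S \<inter> A i) \<subseteq> sets MM" using As Ss by blast
    have s1: "(\<lambda>i. measure MM (S \<inter> A i)) sums measure MM (\<Union>i. S \<inter> A i)"
      by (rule finite_measure_UNION[OF r2 d2])
    have s2: "(\<lambda>i. measure MM (A i)) sums measure MM (\<Union>i. A i)"
      by (rule finite_measure_UNION[OF As union(1)])
    have feq: "(\<lambda>i. measure MM (S \<inter> A i)) = (\<lambda>i. measure MM S * measure MM (A i))"
      by (rule ext) (rule union(3))
    have s3: "(\<lambda>i. measure MM S * measure MM (A i)) sums measure MM (\<Union>i. S \<inter> A i)"
      using s1 unfolding feq .
    have s4: "(\<lambda>i. measure MM S * measure MM (A i)) sums (measure MM S * measure MM (\<Union>i. A i))"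
      using s2 by (rule sums_mult)
    have e1: "measure MM (\<Union>i. S \<inter> A i) = measure MM S * measure MM (\<Union>i. A i)"
      using s3 s4 by (rule sums_unique2)
    have e2: "S \<inter> (\<Union>i. A i) = (\<Union>i. S \<inter> A i)" by blast
    show ?case unfolding e2 by (rule e1)
  qed
qed

lemma NU_space: "NU U \<subseteq> space MM"
  unfolding NU_def space_M by auto

lemma NU_shift:
  assumes u: "ultra U" and d: "d \<in> space MM" "finite {i. d i \<noteq> \<one>}" and x: "x \<in> space MM"
  shows "lmul d x \<in> NU U \<longleftrightarrow> x \<in> NU U"
proof -
  have sub: "{i. lmul d x i \<noteq> x i} \<subseteq> {i. d i \<noteq> \<one>}" "{i. x i \<noteq> lmul d x i} \<subseteq> {i. d i \<noteq> \<one>}"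
    using x by (auto simp: lmul_def space_M)
  have f1: "finite {i. lmul d x i \<noteq> x i}" "finite {i. x i \<noteq> lmul d x i}"
    using d(2) sub finite_subset by blast+
  have xc: "\<forall>i. x i \<in> carrier G" "\<forall>i. lmul d x i \<in> carrier G"
    using x lmul_space[OF d(1) x] by (auto simp: space_M)
  show ?thesis
  proof
    assume "lmul d x \<in> NU U"
    then show "x \<in> NU U" by (rule NU_cofinite[OF u _ xc(1) f1(2)])
  next
    assume "x \<in> NU U"
    then show "lmul d x \<in> NU U" by (rule NU_cofinite[OF u _ xc(2) f1(1)])
  qed
qed

lemma lmul_const_NU:
  assumes u: "ultra U" and h: "h \<in> carrier G" and x: "x \<in> space MM"
  shows "lmul (\<lambda>i. inv h) x \<in> NU U \<longleftrightarrow> {i. x i = h} \<in> U"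
proof -
  have xc: "\<forall>i. x i \<in> carrier G" using x by (auto simp: space_M)
  have "{i. lmul (\<lambda>i. inv h) x i = \<one>} = {i. x i = h}"
    using xc h inv_mult_eq_one by (auto simp: lmul_def)
  moreover have "\<forall>i. lmul (\<lambda>i. inv h) x i \<in> carrier G" using xc h by (auto simp: lmul_def)
  ultimately show ?thesis unfolding NU_def by auto
qed

lemma NU_not_meas:
  assumes u: "ultra U" and g: "g \<in> carrier G" "g \<noteq> \<one>"
  shows "\<not> haar_measurable G (NU U)"
proof
  assume "haar_measurable G (NU U)"
  then have "NU U \<in> sets (completion MM)" unfolding haar_measurable_def .
  then obtain S N N' where T: "NU U = S \<union> N" "N \<subseteq> N'" "N' \<in> null_sets MM" "S \<in> sets MM"
    by (rule sets_completionE)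
  interpret prob_space MM by (rule prob_M)
  have N's: "N' \<in> sets MM" using T(3) by auto
  have N'0: "measure MM N' = 0" using T(3) by (simp add: measure_def null_sets_def)
  have SNU: "S \<subseteq> NU U" using T(1) by auto
  have NUsub: "NU U \<subseteq> S \<union> N'" using T(1,2) by auto
  have Sinv: "invs S"
    unfolding invs_def
  proof (intro conjI ballI impI)
    show "S \<in> sets MM" by (rule T(4))
    fix d assume d: "d \<in> space MM" "finite {i. d i \<noteq> \<one>}"
    have nul: "lmul d -` N' \<inter> space MM \<in> null_sets MM"
      using lmul_emeasure[OF d(1) N's] lmul_sets[OF d(1) N's] T(3) by (auto simp: null_sets_def)
    show "AE x in MM. x \<in> S \<longleftrightarrow> lmul d x \<in> S"
      using AE_space AE_not_in[OF T(3)] AE_not_in[OF nul]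
    proof eventually_elim
      case (elim x)
      then have x: "x \<in> space MM" "x \<notin> N'" "lmul d x \<notin> N'" by auto
      have "x \<in> S \<longleftrightarrow> x \<in> NU U" using x SNU NUsub by auto
      moreover have "lmul d x \<in> S \<longleftrightarrow> lmul d x \<in> NU U" using x SNU NUsub by auto
      ultimately show ?case using NU_shift[OF u d x(1)] by simp
    qed
  qed
  have "measure MM S = measure MM S * measure MM S"
    using indep_meas[OF Sinv T(4)] by simp
  then have "measure MM S * (measure MM S - 1) = 0" by (simp add: algebra_simps)
  then have m01: "measure MM S = 0 \<or> measure MM S = 1" by simp
  have ci: "(\<lambda>i::nat. inv h) \<in> space MM" if "h \<in> carrier G" for h using that by (auto simp: space_M)
  show False
    using m01
  proof
    assume m0: "measure MM S = 0"
    define R where "R h = lmul (\<lambda>i. inv h) -` (S \<union> N') \<inter> space MM" for h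
    have SN's: "S \<union> N' \<in> sets MM" using T(4) N's by auto
    have "measure MM (S \<union> N') \<le> measure MM S + measure MM N'"
      using T(4) N's by (intro measure_subadditive) auto
    then have SN'0: "measure MM (S \<union> N') = 0" using m0 N'0 measure_nonneg[of MM "S \<union> N'"] by simp
    have Rs: "R h \<in> sets MM" if "h \<in> carrier G" for h
      unfolding R_def by (rule lmul_sets[OF ci[OF that] SN's])
    have R0: "measure MM (R h) = 0" if "h \<in> carrier G" for h
      unfolding R_def using lmul_measure[OF ci[OF that] SN's] SN'0 by simp
    have cover: "space MM \<subseteq> (\<Union>h\<in>carrier G. R h)"
    proof
      fix x assume x: "x \<in> space MM"
      have "(\<Union>h\<in>carrier G. {i. x i = h}) = UNIV" using x by (auto simp: space_M)
      then have "(\<Union>h\<in>carrier G. {i. x i = h}) \<in> U" using ultra_UNIV[OF u] by simp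
      then obtain h where h: "h \<in> carrier G" "{i. x i = h} \<in> U"
        using ultra_finite_Union[OF u finC] by blast
      then have "lmul (\<lambda>i. inv h) x \<in> NU U" using lmul_const_NU[OF u h(1) x] by simp
      then have "x \<in> R h" using NUsub x unfolding R_def by auto
      then show "x \<in> (\<Union>h\<in>carrier G. R h)" using h by auto
    qed
    have "1 = measure MM (space MM)" using prob_space by simp
    also have "\<dots> \<le> measure MM (\<Union>h\<in>carrier G. R h)"
    proof (rule finite_measure_mono[OF cover])
      show "(\<Union>h\<in>carrier G. R h) \<in> sets MM" by (rule sets.finite_UN[OF finC Rs])
    qed
    also have "\<dots> \<le> (\<Sum>h\<in>carrier G. measure MM (R h))"
      using Rs finC by (intro finite_measure_subadditive_finite) auto
    also have "\<dots> = 0" using R0 by simp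
    finally show False by simp
  next
    assume m1: "measure MM S = 1"
    define Sg where "Sg = lmul (\<lambda>i. inv g) -` S \<inter> space MM"
    have Sgs: "Sg \<in> sets MM" unfolding Sg_def by (rule lmul_sets[OF ci[OF g(1)] T(4)])
    have Sg1: "measure MM Sg = 1" unfolding Sg_def using lmul_measure[OF ci[OF g(1)] T(4)] m1 by simp
    have disj: "S \<inter> Sg = {}"
    proof (rule ccontr)
      assume "S \<inter> Sg \<noteq> {}"
      then obtain x where x: "x \<in> S" "x \<in> Sg" by auto
      then have xs: "x \<in> space MM" unfolding Sg_def by auto
      have "{i. x i = \<one>} \<in> U" using x(1) SNU unfolding NU_def by auto
      moreover have "{i. x i = g} \<in> U"
        using x(2) SNU lmul_const_NU[OF u g(1) xs] unfolding Sg_def by auto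
      ultimately have "{i. x i = \<one>} \<inter> {i. x i = g} \<in> U" using u ultra_Int by blast
      moreover have "{i. x i = \<one>} \<inter> {i. x i = g} = {}" using g(2) by auto
      ultimately have "{} \<in> U" by simp
      then show False using ultra_not_both[OF u] ultra_UNIV[OF u] by fastforce
    qed
    have "measure MM (S \<union> Sg) = measure MM S + measure MM Sg"
      using T(4) Sgs disj by (intro finite_measure_Union) auto
    then have "measure MM (S \<union> Sg) = 2" using m1 Sg1 by simp
    moreover have "measure MM (S \<union> Sg) \<le> 1" by (rule prob_le_1)
    ultimately show False by simp
  qed
qed

end

lemma carrier_lepoll_nat_sets:
  assumes fin: "finite (carrier \<Gamma>)"
  shows "carrier (omega_power \<Gamma>) \<lesssim> (UNIV :: nat set set)"
proof -
  let ?c = "to_nat_on (carrier \<Gamma>)"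
  define \<phi> where "\<phi> x = range (\<lambda>i. prod_encode (i, ?c (x i)))" for x :: "nat \<Rightarrow> 'a"
  have inj: "inj_on \<phi> (carrier (omega_power \<Gamma>))"
  proof (rule inj_onI)
    fix x y assume x: "x \<in> carrier (omega_power \<Gamma>)" and y: "y \<in> carrier (omega_power \<Gamma>)"
      and e: "\<phi> x = \<phi> y"
    show "x = y"
    proof
      fix i
      have "prod_encode (i, ?c (x i)) \<in> \<phi> y" using e unfolding \<phi>_def by auto
      then obtain j where "prod_encode (i, ?c (x i)) = prod_encode (j, ?c (y j))" unfolding \<phi>_def by auto
      then have "?c (x i) = ?c (y i)" using prod_encode_eq by auto
      moreover have "x i \<in> carrier \<Gamma>" "y i \<in> carrier \<Gamma>" using x y unfolding omega_power_def by auto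
      moreover have "inj_on ?c (carrier \<Gamma>)" using fin by (intro inj_on_to_nat_on countable_finite)
      ultimately show "x i = y i" by (auto dest: inj_onD)
    qed
  qed
  then show ?thesis unfolding lepoll_def' by auto
qed

theorem mainTheorem1:
  fixes \<Gamma> :: "('a, 'b) monoid_scheme"
  assumes "group \<Gamma>"
    and "finite (carrier \<Gamma>)"
    and "carrier \<Gamma> \<noteq> {\<one>\<^bsub>\<Gamma>\<^esub>}"
  shows "{H. subgroup H (omega_power \<Gamma>)
             \<and> (omega_power_topology \<Gamma>) closure_of H = topspace (omega_power_topology \<Gamma>)
             \<and> \<not> haar_measurable \<Gamma> H}
         \<approx> (UNIV :: real set set)"
proof -
  interpret omega \<Gamma>
    by (rule omega.intro[OF assms(1)]) (simp add: omega_axioms_def assms(2))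
  obtain g where g: "g \<in> carrier \<Gamma>" "g \<noteq> \<one>\<^bsub>\<Gamma>\<^esub>" using assms(3) one_closed by blast
  let ?S = "{H. subgroup H (omega_power \<Gamma>)
             \<and> (omega_power_topology \<Gamma>) closure_of H = topspace (omega_power_topology \<Gamma>)
             \<and> \<not> haar_measurable \<Gamma> H}"
  have "?S \<subseteq> Pow (carrier (omega_power \<Gamma>))" using subgroup.subset by blast
  then have "?S \<lesssim> Pow (carrier (omega_power \<Gamma>))" by (rule subset_imp_lepoll)
  also have "carrier (omega_power \<Gamma>) \<lesssim> (UNIV :: real set)"
    using carrier_lepoll_nat_sets[OF assms(2)] nat_sets_eqpoll_reals by (rule lepoll_trans2)
  then have "Pow (carrier (omega_power \<Gamma>)) \<lesssim> Pow (UNIV :: real set)" by (rule Pow_lepoll)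
  finally have le1: "?S \<lesssim> (UNIV :: real set set)" by simp
  have "(UNIV :: real set) \<lesssim> (UNIV :: nat set set)"
    using nat_sets_eqpoll_reals eqpoll_sym eqpoll_imp_lepoll by blast
  then have "Pow (UNIV :: real set) \<lesssim> Pow (UNIV :: nat set set)" by (rule Pow_lepoll)
  also have "Pow (UNIV :: nat set set) \<lesssim> ?S"
    unfolding lepoll_def'
  proof (intro exI conjI)
    show "inj_on (\<lambda>S. NU (ufam S)) (Pow (UNIV :: nat set set))"
    proof (rule inj_onI)
      fix S S' :: "nat set set" assume "NU (ufam S) = NU (ufam S')"
      then have "ufam S = ufam S'" using NU_inj[OF _ _ _ g] ufam by blast
      then show "S = S'" using inj_ufam by (simp add: inj_eq)
    qed
    show "(\<lambda>S. NU (ufam S)) \<in> Pow (UNIV :: nat set set) \<rightarrow> ?S"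
      using NU_subgroup NU_dense NU_not_meas[OF _ g] ufam by blast
  qed
  finally have le2: "(UNIV :: real set set) \<lesssim> ?S" by simp
  show ?thesis using le1 le2 by (rule lepoll_antisym)
qed

end
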